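(* Let $0<e_0\le1$. For the problem $P_m, e_{i,k}\ge e_0\mid\mid C_{\max}$, every list schedule (LS) satisfies $\frac{C_{\max}(LS)}{C^*_{\max}}\le 1+\frac{1}{e_0}$, where $C^*_{\max}$ is the optimal makespan.
   Context: Shared-processing parallel machine scheduling: $m$ identical machines $M_1,\dots,M_m$, $n$ primary jobs available at time $0$ with processing times $p_j>0$, each processed without interruption on one machine, jobs on a machine processed one after another. The time axis of machine $M_i$ is partitioned into consecutive intervals $(0,t_{i,1}],(t_{i,1},t_{i,2}],\dots$ with sharing ratios $e_{i,k}\in(0,1]$; during the $k$-th interval $M_i$ processes primary work at rate $e_{i,k}$. In $P_m, e_{i,k}\ge e_0\mid\mid C_{\max}$ all sharing ratios satisfy $e_{i,k}\ge e_0$ and the objective is the makespan $C_{\max}=\max_j C_j$. List Scheduling (LS): given an arbitrary ordered list of the jobs, the jobs are scheduled one by one in list order, each assigned to a machine that becomes available (finishes its currently assigned jobs) earliest, starting at that time. *)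

theory Defs
  imports "HOL-Analysis.Analysis"
begin

text \<open>For machine i, the breakpoints are t i 0 = 0 < t i 1 < t i 2 < ...
  (unbounded, so the intervals partition the time axis (0,\<infinity>)), and the k-th interval
  (t i k, t i (Suc k)] has sharing ratio r i k.  A profile with finitely many intervals is the
  special case where the ratio is eventually constant.\<close>

definition rate :: "(nat \<Rightarrow> nat \<Rightarrow> real) \<Rightarrow> (nat \<Rightarrow> nat \<Rightarrow> real) \<Rightarrow> nat \<Rightarrow> real \<Rightarrow> real" where
  "rate t r i \<tau> = r i (LEAST k. \<tau> \<le> t i (Suc k))"

definition valid_profile :: "real \<Rightarrow> nat \<Rightarrow> (nat \<Rightarrow> nat \<Rightarrow> real) \<Rightarrow> (nat \<Rightarrow> nat \<Rightarrow> real) \<Rightarrow> bool" where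
  "valid_profile e0 m t r \<longleftrightarrow>
     (\<forall>i<m. t i 0 = 0 \<and> strict_mono (t i) \<and> (\<forall>x. \<exists>k. x \<le> t i k)
            \<and> (\<forall>k. e0 \<le> r i k \<and> r i k \<le> 1))"

definition feasible :: "nat \<Rightarrow> nat \<Rightarrow> (nat \<Rightarrow> real) \<Rightarrow> (nat \<Rightarrow> nat \<Rightarrow> real) \<Rightarrow> (nat \<Rightarrow> nat \<Rightarrow> real)
     \<Rightarrow> (nat \<Rightarrow> nat) \<Rightarrow> (nat \<Rightarrow> real) \<Rightarrow> (nat \<Rightarrow> real) \<Rightarrow> bool" where
  "feasible m n p t r a S C \<longleftrightarrow>
     (\<forall>j<n. a j < m \<and> 0 \<le> S j \<and> S j \<le> C j \<and> (rate t r (a j) has_integral p j) {S j..C j}) \<and>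
     (\<forall>j<n. \<forall>j'<n. j \<noteq> j' \<and> a j = a j' \<longrightarrow> C j \<le> S j' \<or> C j' \<le> S j)"

definition makespan :: "nat \<Rightarrow> (nat \<Rightarrow> real) \<Rightarrow> real" where
  "makespan n C = Max (insert 0 (C ` {..<n}))"

definition avail :: "nat list \<Rightarrow> (nat \<Rightarrow> nat) \<Rightarrow> (nat \<Rightarrow> real) \<Rightarrow> nat \<Rightarrow> nat \<Rightarrow> real" where
  "avail \<pi> a C q i = Max (insert 0 ((\<lambda>l. C (\<pi> ! l)) ` {l. l < q \<and> a (\<pi> ! l) = i}))"

definition is_LS :: "nat \<Rightarrow> nat \<Rightarrow> (nat \<Rightarrow> real) \<Rightarrow> (nat \<Rightarrow> nat \<Rightarrow> real) \<Rightarrow> (nat \<Rightarrow> nat \<Rightarrow> real)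
     \<Rightarrow> nat list \<Rightarrow> (nat \<Rightarrow> nat) \<Rightarrow> (nat \<Rightarrow> real) \<Rightarrow> (nat \<Rightarrow> real) \<Rightarrow> bool" where
  "is_LS m n p t r \<pi> a S C \<longleftrightarrow>
     feasible m n p t r a S C \<and> distinct \<pi> \<and> set \<pi> = {..<n} \<and>
     (\<forall>q<n. S (\<pi> ! q) = avail \<pi> a C q (a (\<pi> ! q)) \<and>
            (\<forall>i<m. avail \<pi> a C q (a (\<pi> ! q)) \<le> avail \<pi> a C q i))"

end

theory Submission
  imports Defs
begin

lemma int_bounds:
  fixes f :: "real \<Rightarrow> real"
  assumes "(f has_integral v) {a..b}" "a \<le> b" "\<And>x. lo \<le> f x" "\<And>x. f x \<le> 1"
  shows "lo * (b - a) \<le> v" "v \<le> b - a"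
proof -
  have c: "\<And>c. ((\<lambda>x. c) has_integral c * (b - a)) {a..b}"
  proof -
    fix c
    show "((\<lambda>x. c) has_integral c * (b - a)) {a..b}"
      using has_integral_const_real[of c a b] assms(2) by (simp add: mult.commute)
  qed
  show "lo * (b - a) \<le> v" by (rule has_integral_le[OF c assms(1)]) (use assms in auto)
  show "v \<le> b - a" using has_integral_le[OF assms(1) c[of 1]] assms by auto
qed

lemma int_split:
  fixes f :: "real \<Rightarrow> real"
  assumes "f integrable_on {a..b}" "a \<le> c" "c \<le> b"
  shows "integral {a..c} f + integral {c..b} f = integral {a..b} f"
proof -
  have "f integrable_on {a..c}" "f integrable_on {c..b}"
    using integrable_subinterval_real[OF assms(1)] assms by auto
  then have "(f has_integral integral {a..c} f + integral {c..b} f) {a..b}"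
    using has_integral_combine[OF assms(2,3)] by (simp add: has_integral_integral)
  then show ?thesis by (simp add: integral_unique)
qed

lemma pack:
  fixes f :: "real \<Rightarrow> real" and S C p :: "nat \<Rightarrow> real"
  assumes "finite J" "\<And>x. 0 \<le> f x"
  shows "(\<forall>j\<in>J. (f has_integral p j) {S j..C j} \<and> 0 \<le> S j \<and> S j < C j \<and> C j \<le> M) \<Longrightarrow>
    (\<forall>j\<in>J. \<forall>j'\<in>J. j \<noteq> j' \<longrightarrow> C j \<le> S j' \<or> C j' \<le> S j) \<Longrightarrow>
    f integrable_on {0..M} \<Longrightarrow> sum p J \<le> integral {0..M} f"
  using assms(1)
proof (induction J arbitrary: M rule: finite_remove_induct)
  case empty
  then show ?case using integral_nonneg[of f "{0..M}"] assms(2) by auto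
next
  case (remove A M)
  have "Max (C ` A) \<in> C ` A" using remove.hyps by (intro Max_in) auto
  then obtain k where k: "k \<in> A" "C k = Max (C ` A)" by auto
  have kmax: "\<And>j. j \<in> A \<Longrightarrow> C j \<le> C k" using k remove.hyps by simp
  have others: "\<And>j. j \<in> A - {k} \<Longrightarrow> C j \<le> S k"
  proof -
    fix j assume j: "j \<in> A - {k}"
    have "C j \<le> S k \<or> C k \<le> S j" using remove.prems(2) j k(1) by blast
    moreover have "S j < C j" using remove.prems(1) j by auto
    ultimately show "C j \<le> S k" using kmax[of j] j by auto
  qed
  have Sk: "0 \<le> S k" "S k < C k" "C k \<le> M" and pk: "(f has_integral p k) {S k..C k}"
    using remove.prems(1) k(1) by auto
  have intSk: "f integrable_on {0..S k}"
    using integrable_subinterval_real[OF remove.prems(3)] Sk by auto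
  have IH: "sum p (A - {k}) \<le> integral {0..S k} f"
    using remove.IH[OF k(1), of "S k"] remove.prems others intSk by auto
  have "sum p A = p k + sum p (A - {k})"
    using remove.hyps k(1) by (simp add: sum.remove)
  also have "\<dots> \<le> integral {S k..C k} f + integral {0..S k} f"
    using IH pk by (simp add: integral_unique)
  also have "\<dots> = integral {0..C k} f"
    using int_split[of f 0 "C k" "S k"] integrable_subinterval_real[OF remove.prems(3), of 0 "C k"] Sk
    by auto
  also have "\<dots> \<le> integral {0..C k} f + integral {C k..M} f"
    using integral_nonneg[of f "{C k..M}"] integrable_subinterval_real[OF remove.prems(3), of "C k" M] Sk assms(2)
    by auto
  also have "\<dots> = integral {0..M} f"
    using int_split[OF remove.prems(3), of "C k"] Sk by auto
  finally show ?case .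
qed

lemma avail_nonneg: "0 \<le> avail \<pi> a C q i"
  unfolding avail_def by (rule Max_ge) auto

lemma avail_Suc:
  "avail \<pi> a C (Suc q) i =
    (if a (\<pi> ! q) = i then max (C (\<pi> ! q)) (avail \<pi> a C q i) else avail \<pi> a C q i)"
proof -
  have fin: "finite {l. l < q \<and> a (\<pi> ! l) = i}" by auto
  show ?thesis
  proof (cases "a (\<pi> ! q) = i")
    case True
    have seteq: "{l. l < Suc q \<and> a (\<pi> ! l) = i} = insert q {l. l < q \<and> a (\<pi> ! l) = i}" using True by auto
    have img: "(\<lambda>l. C (\<pi> ! l)) ` {l. l < Suc q \<and> a (\<pi> ! l) = i} = insert (C (\<pi> ! q)) ((\<lambda>l. C (\<pi> ! l)) ` {l. l < q \<and> a (\<pi> ! l) = i})" unfolding seteq image_insert by (rule refl)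
    have "avail \<pi> a C (Suc q) i = max (C (\<pi> ! q)) (avail \<pi> a C q i)"
      unfolding avail_def img insert_commute[of 0 "C (\<pi> ! q)"]
      by (rule Max_insert) (use fin in auto)
    then show ?thesis using True by simp
  next
    case False
    then have "{l. l < Suc q \<and> a (\<pi> ! l) = i} = {l. l < q \<and> a (\<pi> ! l) = i}" using less_Suc_eq by auto
    then show ?thesis using False unfolding avail_def by simp
  qed
qed

lemma LS_integral:
  assumes "is_LS m n p t r \<pi> a S C" "q \<le> n"
  shows "(rate t r i has_integral (\<Sum>l\<in>{l\<in>{..<q}. a (\<pi> ! l) = i}. p (\<pi> ! l))) {0..avail \<pi> a C q i}"
  using assms(2)
proof (induction q)
  case 0
  then show ?case unfolding avail_def by (simp add: has_integral_refl)
next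
  case (Suc q)
  have q: "q < n" using Suc.prems by simp
  have IH: "(rate t r i has_integral (\<Sum>l\<in>{l\<in>{..<q}. a (\<pi> ! l) = i}. p (\<pi> ! l))) {0..avail \<pi> a C q i}"
    using Suc.IH q by simp
  have LS: "S (\<pi> ! q) = avail \<pi> a C q (a (\<pi> ! q))"
    using assms(1) q unfolding is_LS_def by auto
  have fj: "S (\<pi> ! q) \<le> C (\<pi> ! q)" "(rate t r (a (\<pi> ! q)) has_integral p (\<pi> ! q)) {S (\<pi> ! q)..C (\<pi> ! q)}"
  proof -
    have "\<pi> ! q < n" using assms(1) q unfolding is_LS_def
      by (metis distinct_card card_lessThan lessThan_iff nth_mem)
    then show "S (\<pi> ! q) \<le> C (\<pi> ! q)" "(rate t r (a (\<pi> ! q)) has_integral p (\<pi> ! q)) {S (\<pi> ! q)..C (\<pi> ! q)}"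
      using assms(1) unfolding is_LS_def feasible_def by auto
  qed
  show ?case
  proof (cases "a (\<pi> ! q) = i")
    case True
    have set: "{l\<in>{..<Suc q}. a (\<pi> ! l) = i} = insert q {l\<in>{..<q}. a (\<pi> ! l) = i}"
      using True by auto
    have av: "avail \<pi> a C (Suc q) i = C (\<pi> ! q)"
      using avail_Suc[of \<pi> a C q i] True LS fj(1) by simp
    have "(rate t r i has_integral (\<Sum>l\<in>{l\<in>{..<q}. a (\<pi> ! l) = i}. p (\<pi> ! l)) + p (\<pi> ! q)) {0..C (\<pi> ! q)}"
      using has_integral_combine[OF avail_nonneg fj(1)[unfolded LS True] IH] fj(2) LS True by simp
    then show ?thesis using av set by (simp add: add.commute)
  next
    case False
    have set: "{l\<in>{..<Suc q}. a (\<pi> ! l) = i} = {l\<in>{..<q}. a (\<pi> ! l) = i}"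
      using False by (auto simp: less_Suc_eq)
    show ?thesis using IH set avail_Suc[of \<pi> a C q i] False by simp
  qed
qed

lemma makespan_ge: "j < n \<Longrightarrow> C j \<le> makespan n C"
  unfolding makespan_def by (rule Max_ge) auto

lemma makespan_nonneg: "0 \<le> makespan n C"
  unfolding makespan_def by (rule Max_ge) auto

lemma makespan_cases: "makespan n C = 0 \<or> (\<exists>j<n. makespan n C = C j)"
proof -
  have "makespan n C \<in> insert 0 (C ` {..<n})"
    unfolding makespan_def by (rule Max_in) auto
  then show ?thesis by auto
qed

theorem theorem2:
  fixes e0 :: real and m n :: nat and p :: "nat \<Rightarrow> real"
    and t r :: "nat \<Rightarrow> nat \<Rightarrow> real" and \<pi> :: "nat list"
    and a a' :: "nat \<Rightarrow> nat" and S C S' C' :: "nat \<Rightarrow> real"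
  assumes "0 < e0" and "e0 \<le> 1" and "1 \<le> m"
    and "\<forall>j<n. 0 < p j"
    and "valid_profile e0 m t r"
    and "is_LS m n p t r \<pi> a S C"
    and "feasible m n p t r a' S' C'"
  shows "makespan n C \<le> (1 + 1 / e0) * makespan n C'"
proof -
  define T where "T = makespan n C'"
  have T0: "0 \<le> T" unfolding T_def by (rule makespan_nonneg)
  have rb: "\<And>i x. i < m \<Longrightarrow> e0 \<le> rate t r i x \<and> rate t r i x \<le> 1"
    using assms(5) unfolding valid_profile_def rate_def by auto
  have rnn: "0 \<le> rate t r i x" if "i < m" for i x using rb[OF that, of x] assms(1) by linarith
  have F: "\<And>j. j < n \<Longrightarrow> a j < m \<and> 0 \<le> S j \<and> S j \<le> C j \<and> (rate t r (a j) has_integral p j) {S j..C j}"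
    using assms(6) unfolding is_LS_def feasible_def by auto
  have F': "\<And>j. j < n \<Longrightarrow> a' j < m \<and> 0 \<le> S' j \<and> S' j \<le> C' j \<and> (rate t r (a' j) has_integral p j) {S' j..C' j}"
    using assms(7) unfolding feasible_def by auto
  have disj': "\<forall>j<n. \<forall>j'<n. j \<noteq> j' \<and> a' j = a' j' \<longrightarrow> C' j \<le> S' j' \<or> C' j' \<le> S' j"
    using assms(7) unfolding feasible_def by auto
  have dist: "distinct \<pi>" and setpi: "set \<pi> = {..<n}"
    and LS: "\<And>q. q < n \<Longrightarrow> S (\<pi> ! q) = avail \<pi> a C q (a (\<pi> ! q)) \<and>
            (\<forall>i<m. avail \<pi> a C q (a (\<pi> ! q)) \<le> avail \<pi> a C q i)"
    using assms(6) unfolding is_LS_def by auto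
  have len: "length \<pi> = n" using distinct_card[OF dist] setpi by simp
  have pleC': "p j \<le> C' j - S' j" if "j < n" for j
    using int_bounds(2)[of "rate t r (a' j)" "p j" "S' j" "C' j" e0] F'[OF that] rb[of "a' j"] by auto
  show ?thesis
  proof (cases "makespan n C = 0")
    case True
    then show ?thesis using T0 assms(1) T_def by simp
  next
    case False
    then obtain j where j: "j < n" "makespan n C = C j" using makespan_cases by blast
    have "j \<in> set \<pi>" using j(1) setpi by simp
    then obtain q where q: "q < n" "\<pi> ! q = j" by (auto simp: in_set_conv_nth len)
    have SjT: "S j \<le> T"
    proof (rule ccontr)
      assume "\<not> S j \<le> T"
      then have lt: "T < S j" by simp
      define A where "A i = avail \<pi> a C q i" for i
      define I where "I i = (\<Sum>l\<in>{l\<in>{..<q}. a (\<pi> ! l) = i}. p (\<pi> ! l))" for i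
      have AT: "\<And>i. i < m \<Longrightarrow> T \<le> A i" using LS[OF q(1)] q(2) lt unfolding A_def by fastforce
      have hI: "\<And>i. (rate t r i has_integral I i) {0..A i}"
        unfolding A_def I_def using LS_integral[OF assms(6)] q(1) by simp
      have intT: "rate t r i integrable_on {0..T}" if i: "i < m" for i
        by (rule integrable_subinterval_real[OF has_integral_integrable[OF hI[of i]]]) (use AT[OF i] T0 in auto)
      define R where "R i = integral {0..T} (rate t r i)" for i
      have RI: "\<And>i. i < m \<Longrightarrow> R i \<le> I i"
      proof -
        fix i assume i: "i < m"
        have "I i = integral {0..A i} (rate t r i)" using integral_unique[OF hI[of i]] by simp
        also have "\<dots> = R i + integral {T..A i} (rate t r i)"
          unfolding R_def using int_split[OF has_integral_integrable[OF hI[of i]], of T] AT[OF i] T0 by auto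
        also have "\<dots> \<ge> R i"
          using integral_nonneg[of "rate t r i" "{T..A i}"] rnn[OF i]
            integrable_subinterval_real[of "rate t r i" 0 "A i" T "A i"] hI T0 by auto
        finally show "R i \<le> I i" .
      qed
      have PJ: "\<And>i. i < m \<Longrightarrow> sum p {j\<in>{..<n}. a' j = i} \<le> R i"
      proof -
        fix i assume i: "i < m"
        show "sum p {j\<in>{..<n}. a' j = i} \<le> R i" unfolding R_def
        proof (rule pack[where S=S' and C=C'])
          show "\<forall>j\<in>{j\<in>{..<n}. a' j = i}. (rate t r i has_integral p j) {S' j..C' j} \<and> 0 \<le> S' j \<and> S' j < C' j \<and> C' j \<le> T"
          proof
            fix k assume k: "k \<in> {j\<in>{..<n}. a' j = i}"
            then have "k < n" "a' k = i" by auto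
            then show "(rate t r i has_integral p k) {S' k..C' k} \<and> 0 \<le> S' k \<and> S' k < C' k \<and> C' k \<le> T"
              using F' pleC' assms(4) makespan_ge[of k n C'] T_def by fastforce
          qed
          show "\<forall>j\<in>{j\<in>{..<n}. a' j = i}. \<forall>j'\<in>{j\<in>{..<n}. a' j = i}. j \<noteq> j' \<longrightarrow> C' j \<le> S' j' \<or> C' j' \<le> S' j"
            using disj' by auto
        qed (use intT[OF i] rnn[OF i] in auto)
      qed
      have "sum p {..<n} = (\<Sum>i<m. sum p {j\<in>{..<n}. a' j = i})"
        by (rule sum.group[symmetric]) (use F' in auto)
      also have "\<dots> \<le> (\<Sum>i<m. R i)" by (rule sum_mono) (use PJ in auto)
      also have "\<dots> \<le> (\<Sum>i<m. I i)" by (rule sum_mono) (use RI in auto)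
      also have "\<dots> = (\<Sum>l<q. p (\<pi> ! l))" unfolding I_def
      proof (rule sum.group)
        show "(\<lambda>l. a (\<pi> ! l)) ` {..<q} \<subseteq> {..<m}"
        proof
          fix y assume "y \<in> (\<lambda>l. a (\<pi> ! l)) ` {..<q}"
          then obtain l where l: "l < q" "y = a (\<pi> ! l)" by auto
          have "\<pi> ! l \<in> set \<pi>" using l(1) q(1) len by simp
          then have "\<pi> ! l < n" using setpi by auto
          then show "y \<in> {..<m}" using F l(2) by auto
        qed
      qed auto
      also have "\<dots> = sum p ((!) \<pi> ` {..<q})"
        by (rule sum.reindex[symmetric, unfolded comp_def]) (rule inj_on_nth, use dist q(1) len in auto)
      also have "\<dots> \<le> sum p ({..<n} - {j})"
      proof (rule sum_mono2)
        show "(!) \<pi> ` {..<q} \<subseteq> {..<n} - {j}"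
        proof
          fix x assume "x \<in> (!) \<pi> ` {..<q}"
          then obtain l where l: "l < q" "x = \<pi> ! l" by auto
          have "x \<in> set \<pi>" using l q(1) len by auto
          moreover have "x \<noteq> j" using l q dist len nth_eq_iff_index_eq by fastforce
          ultimately show "x \<in> {..<n} - {j}" using setpi by auto
        qed
      qed (use assms(4) in auto)
      also have "\<dots> = sum p {..<n} - p j" using j(1) by (simp add: sum_diff1)
      also have "\<dots> < sum p {..<n}" using assms(4) j(1) by simp
      finally show False by simp
    qed
    have "e0 * (C j - S j) \<le> p j"
      using int_bounds(1)[of "rate t r (a j)" "p j" "S j" "C j" e0] F[OF j(1)] rb[of "a j"] by auto
    then have "C j - S j \<le> p j / e0" using assms(1) by (simp add: pos_le_divide_eq mult.commute)
    moreover have "p j / e0 \<le> T / e0"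
      using pleC'[OF j(1)] F'[OF j(1)] makespan_ge[OF j(1), of C'] T_def assms(1)
      by (intro divide_right_mono) auto
    ultimately have "C j \<le> T + T / e0" using SjT by linarith
    then show ?thesis using j(2) T_def by (simp add: algebra_simps)
  qed
qed

end
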